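(* For every positive integer $n$, the set $\mathcal{M}_n$ is a closed subset of $\mathbb{R}$.
   Context: For reals $\xi\ne\xi'$ and a positive integer $n$, $\mu_n(\xi,\xi') = \sup_{(s,t)\in\mathbb{Z}^2\setminus\{0\}} \dfrac{\gcd(t,n)\,|\xi-\xi'|}{|s-t\xi|\,|s-t\xi'|} \in\mathbb{R}\cup\{\infty\}$ (with $\gcd(0,n)=n$), and $\mathcal{M}_n$ is the set of finite values of $\mu_n(\xi,\xi')$ over pairs of reals $\xi\neq\xi'$. *)

theory Defs
  imports "HOL-Analysis.Analysis" "HOL-Library.Extended_Real"
begin

text \<open>The quantity gcd(t,n)|xi-xi'| / (|s - t xi| |s - t xi'|) for a pair (s,t),
  as an extended real; a zero denominator (with xi ~= xi') gives infinity.
  Note gcd 0 n = n holds for the library gcd.\<close>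
definition mu_term :: "nat \<Rightarrow> real \<Rightarrow> real \<Rightarrow> int \<Rightarrow> int \<Rightarrow> ereal" where
  "mu_term n \<xi> \<xi>' s t =
     (let d = \<bar>real_of_int s - real_of_int t * \<xi>\<bar> * \<bar>real_of_int s - real_of_int t * \<xi>'\<bar>
      in if d = 0 then \<infinity>
         else ereal (real_of_int (gcd t (int n)) * \<bar>\<xi> - \<xi>'\<bar> / d))"

definition mu :: "nat \<Rightarrow> real \<Rightarrow> real \<Rightarrow> ereal" where
  "mu n \<xi> \<xi>' = (SUP st \<in> (UNIV :: (int \<times> int) set) - {(0, 0)}. mu_term n \<xi> \<xi>' (fst st) (snd st))"

definition M_set :: "nat \<Rightarrow> real set" where
  "M_set n = {r. \<exists>\<xi> \<xi>'. \<xi> \<noteq> \<xi>' \<and> mu n \<xi> \<xi>' = ereal r}"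

end

theory Submission
  imports Defs "HOL-Analysis.Kronecker_Approximation_Theorem" "HOL-Library.Infinite_Set"
begin
definition wt :: "nat \<Rightarrow> int \<Rightarrow> int \<Rightarrow> real \<Rightarrow> real \<Rightarrow> int \<Rightarrow> int \<Rightarrow> ereal" where
  "wt n c d x y s t =
     (let D = \<bar>real_of_int s - real_of_int t * x\<bar> * \<bar>real_of_int s - real_of_int t * y\<bar>
      in if D = 0 then \<infinity>
         else ereal (real_of_int (gcd (s * c + t * d) (int n)) * \<bar>x - y\<bar> / D))"

definition muw :: "nat \<Rightarrow> int \<Rightarrow> int \<Rightarrow> real \<Rightarrow> real \<Rightarrow> ereal" where
  "muw n c d x y = (SUP st \<in> (UNIV :: (int \<times> int) set) - {(0, 0)}. wt n c d x y (fst st) (snd st))"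

lemma mu_term_wt: "mu_term n x y s t = wt n 0 1 x y s t"
  by (simp add: mu_term_def wt_def)

lemma gcd_mod_shift: "gcd (x + int n * k) (int n) = gcd x (int n)"
proof -
  have 1: "x + int n * k = k * int n + x" by simp
  have "gcd (int n) (k * int n + x) = gcd (int n) x" by (rule gcd_add_mult)
  then show ?thesis unfolding 1 by (simp only: gcd.commute)
qed

lemma wt_mod: "wt n c d x y s t = wt n (c mod int n) (d mod int n) x y s t"
proof -
  have eq: "s * c + t * d = (s * (c mod int n) + t * (d mod int n)) + int n * (s * (c div int n) + t * (d div int n))"
  proof -
    have "s * c + t * d = s * (c mod int n + int n * (c div int n)) + t * (d mod int n + int n * (d div int n))"
      by (simp only: mod_mult_div_eq)
    also have "\<dots> = (s * (c mod int n) + t * (d mod int n)) + int n * (s * (c div int n) + t * (d div int n))"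
      by algebra
    finally show ?thesis .
  qed
  have "gcd (s * c + t * d) (int n) = gcd (s * (c mod int n) + t * (d mod int n)) (int n)"
    unfolding eq by (rule gcd_mod_shift)
  then show ?thesis by (simp add: wt_def)
qed

lemma muw_mod: "muw n c d x y = muw n (c mod int n) (d mod int n) x y"
  unfolding muw_def by (subst wt_mod) simp




lemma change_var:
  fixes a b c d :: int and x y :: real
  assumes det: "a * d - b * c = 1" and nx: "c * x + d \<noteq> 0" and ny: "c * y + d \<noteq> 0"
  shows "mu_term n ((a * x+b)/(c * x+d)) ((a * y+b)/(c * y+d)) s t = wt n c d x y (s * d - t * b) (t * a - s * c)"
proof -
  define X where "X = (a * x+b)/(c * x+d)"
  define Y where "Y = (a * y+b)/(c * y+d)"
  have detr: "real_of_int a * d - real_of_int b * c = 1" using arg_cong[OF det, of real_of_int] by simp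
  have hx: "real_of_int s - t * X = (real_of_int (s * d - t * b) - real_of_int (t * a - s * c) * x) / (c * x+d)"
    unfolding X_def using nx by (simp add: field_simps)
  have hy: "real_of_int s - t * Y = (real_of_int (s * d - t * b) - real_of_int (t * a - s * c) * y) / (c * y+d)"
    unfolding Y_def using ny by (simp add: field_simps)
  have hxy: "X - Y = (x - y) / ((c * x+d)*(c * y+d))"
  proof -
    have "(a * x+b)*(c * y+d) - (a * y+b)*(c * x+d) = (real_of_int a * d - real_of_int b * c) * (x - y)"
      by (simp add: algebra_simps)
    also have "\<dots> = x - y" using detr by simp
    finally have num: "(a * x+b)*(c * y+d) - (a * y+b)*(c * x+d) = x - y" .
    have "X - Y = ((a * x+b)*(c * y+d) - (a * y+b)*(c * x+d)) / ((c * x+d)*(c * y+d))"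
      unfolding X_def Y_def using nx ny by (simp add: field_simps)
    then show ?thesis using num by simp
  qed
  have g: "(s * d - t * b) * c + (t * a - s * c) * d = t"
  proof -
    have "(s * d - t * b) * c + (t * a - s * c) * d = t * (a * d - b * c)" by (simp add: algebra_simps)
    then show ?thesis using det by simp
  qed
  define D where "D = \<bar>real_of_int (s * d - t * b) - real_of_int (t * a - s * c) * x\<bar> * \<bar>real_of_int (s * d - t * b) - real_of_int (t * a - s * c) * y\<bar>"
  have DD: "\<bar>real_of_int s - t * X\<bar> * \<bar>real_of_int s - t * Y\<bar> = D / (\<bar>c * x+d\<bar> * \<bar>c * y+d\<bar>)"
    unfolding hx hy D_def by (simp add: abs_mult abs_divide)
  define L where "L = \<bar>real_of_int s - t * X\<bar> * \<bar>real_of_int s - t * Y\<bar>"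
  have e1: "mu_term n X Y s t = (if L = 0 then \<infinity> else ereal (real_of_int (gcd t (int n)) * \<bar>X - Y\<bar> / L))"
    by (simp only: mu_term_def L_def Let_def)
  have e2: "wt n c d x y (s * d - t * b) (t * a - s * c) = (if D = 0 then \<infinity> else ereal (real_of_int (gcd ((s * d - t * b) * c + (t * a - s * c) * d) (int n)) * \<bar>x - y\<bar> / D))"
    by (simp only: wt_def D_def Let_def)
  have LD: "L = D / (\<bar>c * x+d\<bar> * \<bar>c * y+d\<bar>)" using DD L_def by simp
  have "mu_term n X Y s t = wt n c d x y (s * d - t * b) (t * a - s * c)"
  proof (cases "D = 0")
    case True
    then show ?thesis unfolding e1 e2 LD by simp
  next
    case False
    have "\<bar>X - Y\<bar> / (D / (\<bar>c * x+d\<bar> * \<bar>c * y+d\<bar>)) = \<bar>x - y\<bar> / D"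
    proof -
      have p: "\<bar>c * x+d\<bar> * \<bar>c * y+d\<bar> \<noteq> (0::real)" using nx ny by simp
      have "\<bar>X - Y\<bar> = \<bar>x - y\<bar> / (\<bar>c * x+d\<bar> * \<bar>c * y+d\<bar>)"
        unfolding hxy by (simp add: abs_mult abs_divide)
      then show ?thesis using p False by (simp add: field_simps)
    qed
    moreover have "L \<noteq> 0" using False nx ny LD by simp
    ultimately show ?thesis unfolding e1 e2 g using False LD by simp
  qed
  then show ?thesis unfolding X_def Y_def .
qed




lemma mu_eq_muw:
  fixes a b c d :: int and x y :: real
  assumes det: "a * d - b * c = 1" and nx: "c * x + d \<noteq> 0" and ny: "c * y + d \<noteq> 0"
  shows "mu n ((a * x+b)/(c * x+d)) ((a * y+b)/(c * y+d)) = muw n c d x y"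
proof -
  define P where "P = (\<lambda>st::int\<times>int. (fst st * d - snd st * b, snd st * a - fst st * c))"
  define Q where "Q = (\<lambda>st::int\<times>int. (fst st * a + snd st * b, fst st * c + snd st * d))"
  have PQ: "P (Q z) = z" for z
  proof -
    have "fst z * (a * d - b * c) = fst z" "snd z * (a * d - b * c) = snd z" using det by simp_all
    then show ?thesis unfolding P_def Q_def by (cases z) (simp add: algebra_simps)
  qed
  have QP: "Q (P z) = z" for z
  proof -
    have "fst z * (a * d - b * c) = fst z" "snd z * (a * d - b * c) = snd z" using det by simp_all
    then show ?thesis unfolding P_def Q_def by (cases z) (simp add: algebra_simps)
  qed
  have P0: "P (0,0) = (0,0)" by (simp add: P_def)
  have img: "P ` (UNIV - {(0,0)}) = UNIV - {(0,0)}"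
  proof
    show "P ` (UNIV - {(0,0)}) \<subseteq> UNIV - {(0,0)}"
    proof (rule image_subsetI)
      fix z :: "int \<times> int" assume "z \<in> UNIV - {(0,0)}"
      then have z0: "z \<noteq> (0,0)" by simp
      have "P z \<noteq> (0,0)"
      proof
        assume "P z = (0,0)"
        then have "Q (P z) = (0,0)" by (simp add: Q_def)
        then show False using QP[of z] z0 by simp
      qed
      then show "P z \<in> UNIV - {(0,0)}" by simp
    qed
    show "UNIV - {(0,0)} \<subseteq> P ` (UNIV - {(0,0)})"
    proof
      fix z assume z: "z \<in> UNIV - {(0::int,0::int)}"
      have "Q z \<noteq> (0,0)"
      proof
        assume "Q z = (0,0)"
        then have "P (Q z) = (0,0)" by (simp add: P_def)
        then show False using PQ[of z] z by simp
      qed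
      then show "z \<in> P ` (UNIV - {(0,0)})" using PQ[of z] by (intro image_eqI[of _ _ "Q z"]) auto
    qed
  qed
  have "mu n ((a * x+b)/(c * x+d)) ((a * y+b)/(c * y+d)) =
     (SUP st \<in> UNIV - {(0,0)}. wt n c d x y (fst (P st)) (snd (P st)))"
    unfolding mu_def using change_var[OF det nx ny] by (simp add: P_def)
  also have "\<dots> = (SUP z \<in> P ` (UNIV - {(0,0)}). wt n c d x y (fst z) (snd z))"
    by (simp add: image_comp)
  also have "\<dots> = muw n c d x y" unfolding img muw_def ..
  finally show ?thesis .
qed

lemma muw_fin_nz:
  fixes s t :: int and x y :: real
  assumes "muw n c d x y \<noteq> \<infinity>" "(s,t) \<noteq> (0,0)"
  shows "real_of_int s - t * x \<noteq> 0" "real_of_int s - t * y \<noteq> 0"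
proof -
  have "wt n c d x y s t \<le> muw n c d x y" unfolding muw_def
    using assms(2) by (intro SUP_upper2[of "(s,t)"]) auto
  then have "wt n c d x y s t \<noteq> \<infinity>" using assms(1) by auto
  then show "real_of_int s - t * x \<noteq> 0" "real_of_int s - t * y \<noteq> 0"
    by (auto simp: wt_def Let_def split: if_splits)
qed

lemma wt_le_muw: "(s,t) \<noteq> (0,0) \<Longrightarrow> wt n c d x y s t \<le> muw n c d x y"
  unfolding muw_def by (intro SUP_upper2[of "(s,t)"]) auto

lemma wt_10: "wt n c d x y 1 0 = ereal (real_of_int (gcd c (int n)) * \<bar>x - y\<bar>)"
  by (simp add: wt_def)

lemma primitive:
  assumes "n > 0" "(u,v) \<noteq> (0::int,0::int)"
  shows "\<exists>u0 v0. coprime u0 v0 \<and> mu_term n x y u v \<le> mu_term n x y u0 v0"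
proof -
  define g where "g = gcd u v"
  have gpos: "g > 0" using assms(2) by (auto simp: g_def)
  obtain u0 v0 where uv': "u = u0 * g" "v = v0 * g" "coprime u0 v0"
    using gcd_coprime_exists[of u v] gpos unfolding g_def by auto
  have uv: "u = g * u0" "v = g * v0" "coprime u0 v0" using uv' by (simp_all add: mult.commute)
  define D0 where "D0 = \<bar>real_of_int u0 - v0 * x\<bar> * \<bar>real_of_int u0 - v0 * y\<bar>"
  have D: "\<bar>real_of_int u - v * x\<bar> * \<bar>real_of_int u - v * y\<bar> = real_of_int g ^ 2 * D0"
  proof -
    have "real_of_int u - v * x = g * (real_of_int u0 - v0 * x)" "real_of_int u - v * y = g * (real_of_int u0 - v0 * y)"
      using uv by (simp_all add: algebra_simps)
    then show ?thesis unfolding D0_def using gpos by (simp add: abs_mult power2_eq_square)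
  qed
  have m0: "mu_term n x y u0 v0 = (if D0 = 0 then \<infinity> else ereal (real_of_int (gcd v0 (int n)) * \<bar>x - y\<bar> / D0))"
    by (simp only: mu_term_def D0_def Let_def)
  have m1: "mu_term n x y u v = (if real_of_int g ^ 2 * D0 = 0 then \<infinity> else ereal (real_of_int (gcd v (int n)) * \<bar>x - y\<bar> / (real_of_int g ^ 2 * D0)))"
    unfolding D[symmetric] by (simp only: mu_term_def Let_def)
  have "mu_term n x y u v \<le> mu_term n x y u0 v0"
  proof (cases "D0 = 0")
    case True then show ?thesis using m0 by simp
  next
    case False
    then have D0p: "D0 > 0" unfolding D0_def by simp
    have "gcd v (int n) dvd g * gcd v0 (int n)"
    proof -
      have "gcd v (int n) dvd gcd (g * v0) (g * int n)"
        using uv(2) by (simp add: gcd_greatest)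
      also have "gcd (g * v0) (g * int n) = g * gcd v0 (int n)"
        using gcd_mult_distrib_int[of g v0 "int n"] gpos by simp
      finally show ?thesis .
    qed
    then have "gcd v (int n) \<le> g * gcd v0 (int n)"
      using assms(1) gpos by (intro zdvd_imp_le) (auto simp: gcd_pos_int)
    also have "\<dots> \<le> g^2 * gcd v0 (int n)"
      using gpos by (intro mult_right_mono) (auto simp: power2_eq_square)
    finally have leI: "gcd v (int n) \<le> g^2 * gcd v0 (int n)" .
    have le: "real_of_int (gcd v (int n)) \<le> real_of_int g ^ 2 * gcd v0 (int n)"
    proof -
      have "real_of_int (gcd v (int n)) \<le> real_of_int (g^2 * gcd v0 (int n))"
        using leI by (simp only: of_int_le_iff)
      then show ?thesis by simp
    qed
    have "real_of_int (gcd v (int n)) * \<bar>x - y\<bar> / (real_of_int g ^ 2 * D0)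
       \<le> real_of_int g ^ 2 * gcd v0 (int n) * \<bar>x - y\<bar> / (real_of_int g ^ 2 * D0)"
      using le D0p gpos by (intro divide_right_mono mult_right_mono) auto
    also have "\<dots> = real_of_int (gcd v0 (int n)) * \<bar>x - y\<bar> / D0" using gpos by simp
    finally show ?thesis using m0 m1 False gpos by simp
  qed
  then show ?thesis using uv by blast
qed




lemma inv_formula:
  fixes u v b d :: int and x :: real
  assumes det: "u * d - b * v = 1" and nz: "u - v * x \<noteq> 0"
  shows "v * ((d * x - b)/(u - v * x)) + d = 1/(u - v * x)"
    and "u * ((d * x - b)/(u - v * x)) + b = x/(u - v * x)"
    and "x = (u * ((d * x - b)/(u - v * x)) + b) / (v * ((d * x - b)/(u - v * x)) + d)"
proof -
  have detr: "real_of_int u * d - real_of_int b * v = 1" using arg_cong[OF det, of real_of_int] by simp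
  have "v * ((d * x - b)/(u - v * x)) + d = (real_of_int u * d - real_of_int b * v)/(u - v * x)"
    using nz by (simp add: field_simps)
  then show 1: "v * ((d * x - b)/(u - v * x)) + d = 1/(u - v * x)" using detr by simp
  have "u * ((d * x - b)/(u - v * x)) + b = (real_of_int u * d - real_of_int b * v) * x/(u - v * x)"
    using nz by (simp add: field_simps)
  then show 2: "u * ((d * x - b)/(u - v * x)) + b = x/(u - v * x)" using detr by simp
  show "x = (u * ((d * x - b)/(u - v * x)) + b) / (v * ((d * x - b)/(u - v * x)) + d)"
    unfolding 1 2 using nz by simp
qed

lemma normalize:
  fixes u v :: int and x y :: real
  assumes cop: "coprime u v" and nx: "u - v * x \<noteq> 0" and ny: "u - v * y \<noteq> 0"
  obtains b d :: int and e e' :: real where "u * d - b * v = 1" "0 \<le> e" "e < 1" "v * e + d \<noteq> 0" "v * e' + d \<noteq> 0"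
    "x = (u * e + b)/(v * e + d)" "y = (u * e' + b)/(v * e' + d)"
proof -
  obtain p q where "p * u + q * v = gcd u v" using bezout_int by blast
  then have pq: "u * p - (-q) * v = 1" using cop by (simp add: algebra_simps)
  define m where "m = \<lfloor>(p * x - (-q))/(u - v * x)\<rfloor>"
  define b where "b = -q + m * u"
  define d where "d = p + m * v"
  have det: "u * d - b * v = 1" using pq unfolding b_def d_def by (simp add: algebra_simps)
  define e where "e = (d * x - b)/(u - v * x)"
  define e' where "e' = (d * y - b)/(u - v * y)"
  have ee: "e = (p * x - (-q))/(u - v * x) - m"
    unfolding e_def b_def d_def using nx by (simp add: field_simps)
  have "0 \<le> e" "e < 1" unfolding ee m_def by linarith+
  moreover have "v * e + d \<noteq> 0" "v * e' + d \<noteq> 0"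
    using inv_formula(1)[OF det nx] inv_formula(1)[OF det ny] nx ny unfolding e_def e'_def by simp_all
  moreover have "x = (u * e + b)/(v * e + d)" "y = (u * e' + b)/(v * e' + d)"
    using inv_formula(3)[OF det nx] inv_formula(3)[OF det ny] unfolding e_def e'_def by simp_all
  ultimately show ?thesis using that det by blast
qed

lemma mu_lower:
  assumes n: "n > 0" and xy: "x \<noteq> y"
  shows "ereal (1/5) \<le> mu n x y"
proof -
  define \<delta> where "\<delta> = \<bar>x - y\<bar>"
  have dpos: "\<delta> > 0" using xy by (simp add: \<delta>_def)
  have up: "mu_term n x y s t \<le> mu n x y" if "(s,t) \<noteq> (0,0)" for s t
    unfolding mu_def using that by (intro SUP_upper2[of "(s,t)"]) auto
  show ?thesis
  proof (cases "\<delta> \<ge> 1")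
    case True
    have "mu_term n x y 1 0 = ereal (real n * \<delta>)" by (simp add: mu_term_def \<delta>_def)
    moreover have "real n * \<delta> \<ge> 1/5"
    proof -
      have "real n \<ge> 1" using n by simp
      then have "real n * \<delta> \<ge> 1 * 1" using True by (intro mult_mono) auto
      then show ?thesis by simp
    qed
    ultimately have "ereal (1/5) \<le> mu_term n x y 1 0" by simp
    then show ?thesis using up[of 1 0] by simp
  next
    case False
    define r where "r = sqrt \<delta>"
    have rpos: "r > 0" and r1: "r < 1" and r2: "r * r = \<delta>" using dpos False by (auto simp: r_def)
    define N where "N = nat \<lceil>1/r\<rceil>"
    have "1/r > 0" using rpos by simp
    then have c0: "\<lceil>1/r\<rceil> \<ge> 0" by linarith
    have NN: "real N = real_of_int \<lceil>1/r\<rceil>" unfolding N_def using c0 by simp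
    have N1: "1/r \<le> N" unfolding NN using ceiling_correct[of "1/r"] by linarith
    have N2: "N < 1/r + 1" unfolding NN using ceiling_correct[of "1/r"] by linarith
    have "0 < 1/r" using rpos by simp
    then have "0 < real N" using N1 by linarith
    then have Npos: "N > 0" by simp
    have Nr1: "1 \<le> N * r" using N1 rpos by (simp add: field_simps)
    have Nr2: "N * r < 2" using N2 rpos r1 by (simp add: field_simps)
    obtain h k where hk: "0 < k" "k \<le> int N" "\<bar>of_int k * x - of_int h\<bar> < 1/N"
      using Dirichlet_approx[OF Npos] by blast
    have hk0: "(h,k) \<noteq> (0,0)" using hk by auto
    define A where "A = \<bar>real_of_int h - k * x\<bar>"
    define B where "B = \<bar>real_of_int h - k * y\<bar>"
    have A1: "A < 1/N" using hk(3) unfolding A_def by (simp add: abs_minus_commute)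
    have "real_of_int k \<le> real_of_int (int N)" using hk(2) by (simp only: of_int_le_iff)
    then have kN: "real_of_int k \<le> N" by simp
    have "B \<le> A + real_of_int k * \<delta>"
    proof -
      have "real_of_int h - k * y = (real_of_int h - k * x) + k * (x - y)" by (simp add: algebra_simps)
      then have "B = \<bar>(real_of_int h - k * x) + k * (x - y)\<bar>" unfolding B_def by simp
      then have "B \<le> A + \<bar>real_of_int k * (x - y)\<bar>" unfolding A_def by (simp only: abs_triangle_ineq)
      then show ?thesis using hk(1) by (simp add: \<delta>_def abs_mult)
    qed
    also have "\<dots> < 1/N + N * \<delta>" using A1 kN dpos by (intro add_less_le_mono mult_right_mono) auto
    finally have B1: "B < 1/N + N*\<delta>" by linarith
    have "mu_term n x y h k \<ge> ereal (1/5)"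
    proof (cases "A * B = 0")
      case True then show ?thesis by (simp add: mu_term_def A_def B_def)
    next
      case False
      then have Ap: "A > 0" and Bp: "B > 0" unfolding A_def B_def by auto
      have g1: "real_of_int (gcd k (int n)) \<ge> 1"
      proof -
        have "gcd k (int n) > 0" using hk(1) by simp
        then have "gcd k (int n) \<ge> 1" by linarith
        then show ?thesis by (simp only: of_int_1_le_iff)
      qed
      have "A * B < (1/N) * (1/N + N*\<delta>)" using A1 B1 Ap Bp Npos by (intro mult_strict_mono) auto
      also have "\<dots> = (1 + (N * r)^2) / N^2" using r2 Npos by (simp add: field_simps power2_eq_square)
      also have "\<dots> \<le> 5 / N^2" 
      proof -
        have "(N*r)^2 \<le> 2^2" using Nr2 Nr1 by (intro power_mono) auto
        then have "1 + (N*r)^2 \<le> 5" by simp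
        then show ?thesis by (intro divide_right_mono) auto
      qed
      finally have AB: "A * B < 5 / N^2" .
      have "1/5 * (A * B) < \<delta>"
      proof -
        have "1/5 * (A * B) < 1/5 * (5 / N^2)" using AB by simp
        also have "\<dots> = 1/N^2" by simp
        also have "\<dots> \<le> \<delta>"
        proof -
          have "1 * 1 \<le> (N * r) * (N * r)" using Nr1 by (intro mult_mono) auto
          moreover have "(N*r) * (N*r) = real N ^ 2 * \<delta>" using r2[symmetric] by (simp add: power2_eq_square algebra_simps)
          ultimately have "1 \<le> real N ^ 2 * \<delta>" by simp
          then show ?thesis using Npos by (simp add: field_simps)
        qed
        finally show ?thesis .
      qed
      then have "1/5 \<le> \<delta> / (A * B)" using Ap Bp by (simp add: field_simps)
      also have "\<dots> \<le> real_of_int (gcd k (int n)) * \<delta> / (A * B)"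
        using g1 Ap Bp dpos by (intro divide_right_mono) auto
      finally show ?thesis using False by (simp add: mu_term_def A_def B_def \<delta>_def)
    qed
    then show ?thesis using up[OF hk0] by (rule order_trans)
  qed
qed




lemma mob_diff:
  fixes a b c d :: int and x y :: real
  assumes det: "a * d - b * c = 1" and nx: "c * x + d \<noteq> 0" and ny: "c * y + d \<noteq> 0"
  shows "(a * x+b)/(c * x+d) - (a * y+b)/(c * y+d) = (x - y) / ((c * x+d)*(c * y+d))"
proof -
  have detr: "real_of_int a * d - real_of_int b * c = 1" using arg_cong[OF det, of real_of_int] by simp
  have "(a * x+b)*(c * y+d) - (a * y+b)*(c * x+d) = (real_of_int a * d - real_of_int b * c) * (x - y)"
    by (simp add: algebra_simps)
  also have "\<dots> = x - y" using detr by simp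
  finally have num: "(a * x+b)*(c * y+d) - (a * y+b)*(c * x+d) = x - y" .
  have "(a * x+b)/(c * x+d) - (a * y+b)/(c * y+d) = ((a * x+b)*(c * y+d) - (a * y+b)*(c * x+d)) / ((c * x+d)*(c * y+d))"
    using nx ny by (simp add: field_simps)
  then show ?thesis using num by simp
qed

lemma normal_form:
  assumes n: "n > 0" and zin: "z \<in> M_set n" and e: "\<epsilon> > 0"
  shows "\<exists>c d a b e e'. a * d - b * c = 1 \<and> 0 \<le> e \<and> e < 1 \<and> muw n c d e e' = ereal z
           \<and> ereal (z - \<epsilon>) < wt n c d e e' 1 0"
proof -
  obtain x y where xy: "x \<noteq> y" "mu n x y = ereal z" using zin by (auto simp: M_set_def)
  have "ereal (z - \<epsilon>) < mu n x y" using xy e by simp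
  then obtain st where st: "st \<in> UNIV - {(0,0)}" "ereal (z - \<epsilon>) < mu_term n x y (fst st) (snd st)"
    unfolding mu_def less_SUP_iff by blast
  have st0: "(fst st, snd st) \<noteq> (0,0)" using st(1) by auto
  obtain u0 v0 where uv: "coprime u0 v0" "mu_term n x y (fst st) (snd st) \<le> mu_term n x y u0 v0"
    using primitive[OF n st0] by blast
  have uv0: "(u0,v0) \<noteq> (0,0)" using uv(1) by auto
  have mw: "mu n x y = muw n 0 1 x y" by (simp add: mu_def muw_def mu_term_wt)
  have fin: "muw n 0 1 x y \<noteq> \<infinity>" using xy(2) mw by simp
  have nx: "u0 - v0 * x \<noteq> 0" and ny: "u0 - v0 * y \<noteq> 0" using muw_fin_nz[OF fin uv0] by auto
  obtain b d :: int and e e' :: real where nf: "u0 * d - b * v0 = 1" "0 \<le> e" "e < 1" "v0 * e + d \<noteq> 0" "v0 * e' + d \<noteq> 0"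
    "x = (u0 * e + b)/(v0 * e + d)" "y = (u0 * e' + b)/(v0 * e' + d)"
    by (rule normalize[OF uv(1) nx ny])
  have det: "u0 * d - b * v0 = 1" by (rule nf(1))
  have "mu n x y = muw n v0 d e e'"
    by (subst nf(6), subst nf(7), rule mu_eq_muw[OF det nf(4) nf(5)])
  moreover have "mu_term n x y u0 v0 = wt n v0 d e e' 1 0"
  proof -
    have "mu_term n x y u0 v0 = wt n v0 d e e' (u0 * d - v0 * b) (v0 * u0 - u0 * v0)"
      by (subst nf(6), subst nf(7), rule change_var[OF det nf(4) nf(5)])
    moreover have "u0 * d - v0 * b = 1" using det by (simp add: mult.commute)
    ultimately show ?thesis by simp
  qed
  ultimately show ?thesis using nf det xy(2) st(2) uv(2)
    by (intro exI[of _ v0] exI[of _ d] exI[of _ u0] exI[of _ b] exI[of _ e] exI[of _ e']) auto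
qed




lemma key:
  assumes n: "n > 0" and xs: "\<And>k. xs k \<in> M_set n" and lim: "xs \<longlonglongrightarrow> l"
  shows "l \<in> M_set n"
proof -
  define Q where "Q = (\<lambda>k (p :: int \<times> int \<times> int \<times> int \<times> real \<times> real).
     case p of (c,d,a,b,e,e') \<Rightarrow> a * d - b * c = 1 \<and> 0 \<le> e \<and> e < 1 \<and> muw n c d e e' = ereal (xs k)
           \<and> ereal (xs k - inverse (real (Suc k))) < wt n c d e e' 1 0)"
  have "\<forall>k. \<exists>p. Q k p"
  proof
    fix k
    have "inverse (real (Suc k)) > 0" by simp
    from normal_form[OF n xs this] obtain c d a b e e' where
      "a * d - b * c = 1 \<and> 0 \<le> e \<and> e < 1 \<and> muw n c d e e' = ereal (xs k)
           \<and> ereal (xs k - inverse (real (Suc k))) < wt n c d e e' 1 0" by blast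
    then show "\<exists>p. Q k p" unfolding Q_def by (intro exI[of _ "(c,d,a,b,e,e')"]) simp
  qed
  then have "\<exists>P. \<forall>k. Q k (P k)" by (rule choice)
  then obtain P where P0: "\<forall>k. Q k (P k)" by blast
  have P: "Q k (P k)" for k using P0 by blast
  define c where "c = (\<lambda>k. fst (P k))"
  define d where "d = (\<lambda>k. fst (snd (P k)))"
  define a where "a = (\<lambda>k. fst (snd (snd (P k))))"
  define b where "b = (\<lambda>k. fst (snd (snd (snd (P k)))))"
  define e where "e = (\<lambda>k. fst (snd (snd (snd (snd (P k))))))"
  define e' where "e' = (\<lambda>k. snd (snd (snd (snd (snd (P k))))))"
  have PP: "P k = (c k, d k, a k, b k, e k, e' k)" for k
    unfolding a_def b_def c_def d_def e_def e'_def by simp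
  have det: "a k * d k - b k * c k = 1" and e0: "0 \<le> e k" and e1: "e k < 1"
    and mk: "muw n (c k) (d k) (e k) (e' k) = ereal (xs k)"
    and wk: "ereal (xs k - inverse (real (Suc k))) < wt n (c k) (d k) (e k) (e' k) 1 0" for k
    using P[of k] unfolding PP Q_def by auto
  have xs5: "1/5 \<le> xs k" for k
  proof -
    obtain x y where "x \<noteq> y" "mu n x y = ereal (xs k)" using xs[of k] by (auto simp: M_set_def)
    then show ?thesis using mu_lower[OF n, of x y] by simp
  qed
  have l5: "1/5 \<le> l" using lim xs5 by (intro LIMSEQ_le_const[OF lim]) auto
  obtain B where B: "\<And>k. \<bar>xs k\<bar> \<le> B"
    using convergent_imp_bounded[OF lim] unfolding bounded_real by auto
  have gk1: "real_of_int (gcd cc (int n)) \<ge> 1" for cc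
  proof -
    have "gcd cc (int n) > 0" using n by simp
    then have "gcd cc (int n) \<ge> 1" by linarith
    then show ?thesis by (simp only: of_int_1_le_iff)
  qed
  have ub: "real_of_int (gcd (c k) (int n)) * \<bar>e k - e' k\<bar> \<le> xs k" for k
    using wt_le_muw[of 1 0 n "c k" "d k" "e k" "e' k"] mk[of k] by (simp add: wt_10)
  have bd: "\<bar>e k - e' k\<bar> \<le> B" for k
  proof -
    have "1 * \<bar>e k - e' k\<bar> \<le> real_of_int (gcd (c k) (int n)) * \<bar>e k - e' k\<bar>"
      by (intro mult_right_mono gk1) auto
    then have "\<bar>e k - e' k\<bar> \<le> real_of_int (gcd (c k) (int n)) * \<bar>e k - e' k\<bar>" by simp
    also have "\<dots> \<le> xs k" by (rule ub)
    also have "\<dots> \<le> B" using B[of k] by simp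
    finally show ?thesis .
  qed
  define cls where "cls = (\<lambda>k. (c k mod int n, d k mod int n))"
  have "finite (cls ` UNIV)"
  proof (rule finite_subset)
    show "cls ` UNIV \<subseteq> {0..<int n} \<times> {0..<int n}" using n by (auto simp: cls_def)
  qed auto
  then obtain k0 where k0: "infinite {k \<in> UNIV. cls k = cls k0}"
    using pigeonhole_infinite[of "UNIV :: nat set" cls] by auto
  define S where "S = {k \<in> UNIV. cls k = cls k0}"
  have infS: "infinite S" using k0 by (simp add: S_def)
  define \<sigma>0 where "\<sigma>0 = enumerate S"
  have sm0: "strict_mono \<sigma>0" unfolding \<sigma>0_def by (rule strict_mono_enumerate[OF infS])
  have inS: "\<sigma>0 j \<in> S" for j unfolding \<sigma>0_def by (rule enumerate_in_set[OF infS])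
  define c0 where "c0 = c k0 mod int n"
  define d0 where "d0 = d k0 mod int n"
  have clsS: "c k mod int n = c0" "d k mod int n = d0" if "k \<in> S" for k
    using that by (auto simp: S_def cls_def c0_def d0_def)
  define f where "f = (\<lambda>j. (e (\<sigma>0 j), e' (\<sigma>0 j)))"
  have "bounded (range f)"
  proof (rule bounded_subset)
    show "bounded ({-1..1::real} \<times> {-(B+1)..B+1::real})" by (intro bounded_Times compact_imp_bounded compact_Icc)
    show "range f \<subseteq> {-1..1::real} \<times> {-(B+1)..B+1::real}"
    proof
      fix z assume "z \<in> range f"
      then obtain j where z: "z = f j" by auto
      have "\<bar>e (\<sigma>0 j) - e' (\<sigma>0 j)\<bar> \<le> B" by (rule bd)
      then show "z \<in> {-1..1::real} \<times> {-(B+1)..B+1::real}"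
        using e0[of "\<sigma>0 j"] e1[of "\<sigma>0 j"] unfolding z f_def by auto
    qed
  qed
  then obtain L r where r: "strict_mono r" and Lr: "(f \<circ> r) \<longlonglongrightarrow> L"
    using bounded_imp_convergent_subsequence by blast
  define E where "E = fst L"
  define E' where "E' = snd L"
  define \<sigma> where "\<sigma> = \<sigma>0 \<circ> r"
  have sm: "strict_mono \<sigma>" unfolding \<sigma>_def by (rule strict_mono_o[OF sm0 r])
  have inS2: "\<sigma> j \<in> S" for j unfolding \<sigma>_def by (simp add: inS)
  have eE: "(\<lambda>j. e (\<sigma> j)) \<longlonglongrightarrow> E"
    using tendsto_fst[OF Lr] unfolding E_def f_def \<sigma>_def by (simp add: comp_def)
  have eE': "(\<lambda>j. e' (\<sigma> j)) \<longlonglongrightarrow> E'"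
    using tendsto_snd[OF Lr] unfolding E'_def f_def \<sigma>_def by (simp add: comp_def)
  have xl: "(\<lambda>j. xs (\<sigma> j)) \<longlonglongrightarrow> l"
    using LIMSEQ_subseq_LIMSEQ[OF lim sm] by (simp add: comp_def)
  define G where "G = real_of_int (gcd c0 (int n))"
  have G1: "G \<ge> 1" unfolding G_def by (rule gk1)
  have mS: "muw n c0 d0 (e k) (e' k) = ereal (xs k)" if "k \<in> S" for k
    using mk[of k] muw_mod[of n "c k" "d k"] clsS[OF that] by simp
  have ubS: "G * \<bar>e k - e' k\<bar> \<le> xs k" if "k \<in> S" for k
    using wt_le_muw[of 1 0 n c0 d0 "e k" "e' k"] mS[OF that] by (simp add: wt_10 G_def)
  have lbS: "xs k - inverse (real (Suc k)) < G * \<bar>e k - e' k\<bar>" if "k \<in> S" for k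
  proof -
    have "wt n (c k) (d k) (e k) (e' k) 1 0 = wt n c0 d0 (e k) (e' k) 1 0"
      using wt_mod[of n "c k" "d k" "e k" "e' k" 1 0] clsS[OF that] by simp
    then have "ereal (xs k - inverse (real (Suc k))) < wt n c0 d0 (e k) (e' k) 1 0"
      using wk[of k] by simp
    then have "ereal (xs k - inverse (real (Suc k))) < ereal (G * \<bar>e k - e' k\<bar>)"
      by (simp only: wt_10 G_def)
    then show ?thesis by simp
  qed
  have lim1: "(\<lambda>j. G * \<bar>e (\<sigma> j) - e' (\<sigma> j)\<bar>) \<longlonglongrightarrow> G * \<bar>E - E'\<bar>"
    by (intro tendsto_intros eE eE')
  have "G * \<bar>E - E'\<bar> \<le> l"
    using lim1 xl ubS inS2 by (intro LIMSEQ_le) auto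
  moreover have "l \<le> G * \<bar>E - E'\<bar>"
  proof (rule LIMSEQ_le)
    show "(\<lambda>j. xs (\<sigma> j) - inverse (real (Suc j))) \<longlonglongrightarrow> l"
      using tendsto_diff[OF xl LIMSEQ_inverse_real_of_nat] by simp
    show "(\<lambda>j. G * \<bar>e (\<sigma> j) - e' (\<sigma> j)\<bar>) \<longlonglongrightarrow> G * \<bar>E - E'\<bar>" by (rule lim1)
    show "\<exists>N. \<forall>j\<ge>N. xs (\<sigma> j) - inverse (real (Suc j)) \<le> G * \<bar>e (\<sigma> j) - e' (\<sigma> j)\<bar>"
    proof (intro exI allI impI)
      fix j
      have "inverse (real (Suc (\<sigma> j))) \<le> inverse (real (Suc j))"
        using seq_suble[OF sm, of j] by (simp add: field_simps)
      then show "xs (\<sigma> j) - inverse (real (Suc j)) \<le> G * \<bar>e (\<sigma> j) - e' (\<sigma> j)\<bar>"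
        using lbS[OF inS2[of j]] by linarith
    qed
  qed
  ultimately have GE: "G * \<bar>E - E'\<bar> = l" by linarith
  have EE: "\<bar>E - E'\<bar> > 0"
  proof -
    have "G * \<bar>E - E'\<bar> > 0" using GE l5 by linarith
    then show ?thesis using G1 by (simp add: zero_less_mult_iff)
  qed
  have le: "muw n c0 d0 E E' \<le> ereal l"
    unfolding muw_def
  proof (rule SUP_least)
    fix st :: "int \<times> int" assume st: "st \<in> UNIV - {(0,0)}"
    obtain s t where stp: "st = (s,t)" by (cases st)
    have st0: "(s,t) \<noteq> (0,0)" using st stp by auto
    define w where "w = real_of_int (gcd (s * c0 + t * d0) (int n))"
    have w1: "w \<ge> 1" unfolding w_def by (rule gk1)
    define DD where "DD = (\<lambda>(x::real) (y::real). \<bar>real_of_int s - t * x\<bar> * \<bar>real_of_int s - t * y\<bar>)"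
    have wtDD: "wt n c0 d0 x y s t = (if DD x y = 0 then \<infinity> else ereal (w * \<bar>x - y\<bar> / DD x y))" for x y
      unfolding wt_def w_def DD_def Let_def by (rule refl)
    have ineq: "w * \<bar>e k - e' k\<bar> \<le> xs k * DD (e k) (e' k)" if "k \<in> S" for k
    proof -
      have fin: "muw n c0 d0 (e k) (e' k) \<noteq> \<infinity>" using mS[OF that] by simp
      have Dp: "DD (e k) (e' k) > 0" using muw_fin_nz[OF fin st0] unfolding DD_def by simp
      have "wt n c0 d0 (e k) (e' k) s t \<le> ereal (xs k)" using wt_le_muw[OF st0, of n c0 d0 "e k" "e' k"] mS[OF that] by simp
      then have "w * \<bar>e k - e' k\<bar> / DD (e k) (e' k) \<le> xs k"
        using Dp unfolding wtDD by simp
      then show ?thesis using Dp by (simp add: field_simps)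
    qed
    have "w * \<bar>E - E'\<bar> \<le> l * DD E E'"
    proof (rule LIMSEQ_le)
      show "(\<lambda>j. w * \<bar>e (\<sigma> j) - e' (\<sigma> j)\<bar>) \<longlonglongrightarrow> w * \<bar>E - E'\<bar>" by (intro tendsto_intros eE eE')
      show "(\<lambda>j. xs (\<sigma> j) * DD (e (\<sigma> j)) (e' (\<sigma> j))) \<longlonglongrightarrow> l * DD E E'"
        unfolding DD_def by (intro tendsto_intros eE eE' xl)
      show "\<exists>N. \<forall>j\<ge>N. w * \<bar>e (\<sigma> j) - e' (\<sigma> j)\<bar> \<le> xs (\<sigma> j) * DD (e (\<sigma> j)) (e' (\<sigma> j))"
        using ineq inS2 by blast
    qed
    moreover have "w * \<bar>E - E'\<bar> > 0" using w1 EE by simp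
    ultimately have DP: "DD E E' > 0"
    proof -
      assume a1: "w * \<bar>E - E'\<bar> \<le> l * DD E E'" and a2: "w * \<bar>E - E'\<bar> > 0"
      have "DD E E' \<ge> 0" by (simp add: DD_def)
      moreover have "DD E E' \<noteq> 0"
      proof
        assume "DD E E' = 0"
        then show False using a1 a2 by simp
      qed
      ultimately show ?thesis by linarith
    qed
    then have "w * \<bar>E - E'\<bar> / DD E E' \<le> l" using \<open>w * \<bar>E - E'\<bar> \<le> l * DD E E'\<close>
      by (simp add: field_simps)
    then show "wt n c0 d0 E E' (fst st) (snd st) \<le> ereal l"
      using DP unfolding stp fst_conv snd_conv wtDD by simp
  qed
  have ge: "ereal l \<le> muw n c0 d0 E E'"
    using wt_le_muw[of 1 0 n c0 d0 E E'] GE by (simp add: wt_10 G_def)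
  have muwE: "muw n c0 d0 E E' = ereal l" using le ge by simp
  have k0S: "k0 \<in> S" by (simp add: S_def)
  have muwk: "muw n (c k0) (d k0) E E' = ereal l"
    using muwE muw_mod[of n "c k0" "d k0" E E'] by (simp add: c0_def d0_def)
  have fin: "muw n (c k0) (d k0) E E' \<noteq> \<infinity>" using muwk by simp
  have dc0: "(d k0, - c k0) \<noteq> (0,0)" using det[of k0] by auto
  have nE: "c k0 * E + d k0 \<noteq> 0" using muw_fin_nz(1)[OF fin dc0] by (simp add: algebra_simps)
  have nE': "c k0 * E' + d k0 \<noteq> 0" using muw_fin_nz(2)[OF fin dc0] by (simp add: algebra_simps)
  define X where "X = (a k0 * E + b k0) / (c k0 * E + d k0)"
  define Y where "Y = (a k0 * E' + b k0) / (c k0 * E' + d k0)"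
  have "X - Y = (E - E') / ((c k0 * E + d k0) * (c k0 * E' + d k0))"
    unfolding X_def Y_def by (rule mob_diff[OF det nE nE'])
  then have XY: "X \<noteq> Y" using EE nE nE' by auto
  have "mu n X Y = ereal l" unfolding X_def Y_def using mu_eq_muw[OF det nE nE'] muwk by simp
  then show ?thesis using XY by (auto simp: M_set_def)
qed

theorem proposition3p6:
  fixes n :: nat
  assumes "n > 0"
  shows "closed (M_set n)"
  unfolding closed_sequential_limits using key[OF assms] by blast


end
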